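(* Let $A$ be a commutative unital ring, let $R$ be a positive totally ordered aura with tempered growth, and let $|\cdot|:A\to R$ be a power-multiplicative generalized seminorm. Then $|\cdot|$ is pre-archimedean, i.e. $$|a+b|\leq \max(|2|,1)\cdot\max(|a|,|b|)\quad\text{for all }a,b\in A,$$ where $2=1+1\in A$. If moreover $|2|>1$, then the restriction $|\cdot|_{|\mathbb{Z}}$ (the composite $\mathbb{Z}\to A\xrightarrow{|\cdot|}R$ of the canonical ring map with $|\cdot|$) is multiplicatively equivalent to the archimedean seminorm $|\cdot|_\infty:\mathbb{Z}\to\mathbb{Q}_{+}$, $|n|_\infty=\max(n,-n)$.
   Context: All semirings are commutative and unital. A halo is a semiring with a partial order $\leq$ compatible with its operations: $x\leq z$ and $y\leq t$ imply $xy\leq zt$ and $x+y\leq z+t$. A halo morphism $f:A\to B$ is an increasing map with $f(0)=0$, $f(1)=1$, $f(a+b)\leq f(a)+f(b)$ and $f(ab)\leq f(a)f(b)$. A ring is regarded as a halo with the trivial (equality) order. An aura is a halo whose underlying semiring is a semifield; it is positive if $0<1$. For $n\in\mathbb{N}$, $n$ also denotes $1+\dots+1$ ($n$ times) in any semiring. A halo $R$ has tempered growth if for every non-zero polynomial $P\in\mathbb{N}[X]$ and every $x\in R$, ($x^n\leq P(n)$ in $R$ for all $n\in\mathbb{N}$) implies $x\leq 1$. A generalized seminorm on a ring $A$ is a halo morphism $|\cdot|:A\to R$ into a positive totally ordered aura $R$; it is power-multiplicative if $|a^n|=|a|^n$ for all $a\in A$, $n\in\mathbb{N}$. The set $\mathbb{Q}_+$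 of non-negative rationals with usual operations and order is a positive totally ordered aura. Given halo morphisms $|\cdot|_1:A\to R$, $|\cdot|_2:A\to S$, write $|\cdot|_1\leq_m|\cdot|_2$ if for all $a,b,c\in A$, $|a|_2|c|_2\leq|b|_2$ implies $|a|_1|c|_1\leq|b|_1$; they are multiplicatively equivalent if $|\cdot|_1\leq_m|\cdot|_2$ and $|\cdot|_2\leq_m|\cdot|_1$. *)

theory Defs
  imports Complex_Main "HOL-Computational_Algebra.Polynomial"
begin

text \<open>The aura R is modelled as a type 'r whose commutative unital semiring
structure is given by the class comm_semiring_1 and whose total order is given
by the class linorder (a priori unrelated to the arithmetic).\<close>

definition pos_tot_aura :: "'r::{comm_semiring_1,linorder} itself \<Rightarrow> bool" where
  "pos_tot_aura _ \<longleftrightarrow>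
     (\<forall>x y z t :: 'r. x \<le> z \<longrightarrow> y \<le> t \<longrightarrow> x * y \<le> z * t \<and> x + y \<le> z + t) \<and>
     (\<forall>x :: 'r. x \<noteq> 0 \<longrightarrow> (\<exists>y. x * y = 1)) \<and>
     (0::'r) < 1"

definition tempered_growth :: "'r::{comm_semiring_1,linorder} itself \<Rightarrow> bool" where
  "tempered_growth _ \<longleftrightarrow>
     (\<forall>(P :: nat poly) (x :: 'r). P \<noteq> 0 \<longrightarrow>
        (\<forall>n::nat. x ^ n \<le> of_nat (poly P n)) \<longrightarrow> x \<le> 1)"

text \<open>Halo morphism from a ring (trivial order, so monotonicity is automatic)
  into an ordered semiring.\<close>

definition halo_morphism_from_ring ::
  "('a::comm_ring_1 \<Rightarrow> 'r::{comm_semiring_1,linorder}) \<Rightarrow> bool" where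
  "halo_morphism_from_ring f \<longleftrightarrow>
     f 0 = 0 \<and> f 1 = 1 \<and>
     (\<forall>a b. f (a + b) \<le> f a + f b) \<and>
     (\<forall>a b. f (a * b) \<le> f a * f b)"

definition power_multiplicative ::
  "('a::comm_ring_1 \<Rightarrow> 'r::comm_semiring_1) \<Rightarrow> bool" where
  "power_multiplicative f \<longleftrightarrow> (\<forall>a (n::nat). f (a ^ n) = f a ^ n)"

definition mult_le ::
  "('a \<Rightarrow> 'r::{times,ord}) \<Rightarrow> ('a \<Rightarrow> 's::{times,ord}) \<Rightarrow> bool" where
  "mult_le f1 f2 \<longleftrightarrow>
     (\<forall>a b c. f2 a * f2 c \<le> f2 b \<longrightarrow> f1 a * f1 c \<le> f1 b)"

definition mult_equiv ::
  "('a \<Rightarrow> 'r::{times,ord}) \<Rightarrow> ('a \<Rightarrow> 's::{times,ord}) \<Rightarrow> bool" where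
  "mult_equiv f1 f2 \<longleftrightarrow> mult_le f1 f2 \<and> mult_le f2 f1"

definition arch_abs :: "int \<Rightarrow> rat" where
  "arch_abs n = of_int (max n (- n))"

end

theory Submission
  imports Defs
begin

context
  fixes TT :: "'r::{comm_semiring_1,linorder} itself"
  assumes A: "pos_tot_aura TT"
begin

lemma mm: "(x::'r) \<le> z \<Longrightarrow> y \<le> t \<Longrightarrow> x * y \<le> z * t"
  using A unfolding pos_tot_aura_def by blast
lemma ma: "(x::'r) \<le> z \<Longrightarrow> y \<le> t \<Longrightarrow> x + y \<le> z + t"
  using A unfolding pos_tot_aura_def by blast
lemma inv_ex: "(x::'r) \<noteq> 0 \<Longrightarrow> \<exists>y. x * y = 1"
  using A unfolding pos_tot_aura_def by blast
lemma zl1: "(0::'r) < 1"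
  using A unfolding pos_tot_aura_def by blast

lemma nonneg: "(0::'r) \<le> x"
proof (rule ccontr)
  assume "\<not> 0 \<le> x"
  hence x0: "x \<le> 0" "x \<noteq> 0" by auto
  obtain y where y: "x * y = 1" using inv_ex x0(2) by blast
  have "x * y \<le> 0"
  proof (cases "y \<le> 0")
    case True then show ?thesis using mm[OF x0(1) True] by simp
  next
    case False then show ?thesis using mm[OF x0(1), of y y] by simp
  qed
  thus False using y zl1 by simp
qed

lemma nzd: "(x::'r) * y = 0 \<Longrightarrow> x = 0 \<or> y = 0"
proof (rule ccontr)
  assume h: "x * y = 0" "\<not> (x = 0 \<or> y = 0)"
  then obtain x' where x': "x * x' = 1" using inv_ex by blast
  have "y = x' * (x * y)" using x' by (metis mult.assoc mult.commute mult_1_left)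
  with h show False by simp
qed

lemma cancel: "(y::'r) \<noteq> 0 \<Longrightarrow> x * y \<le> z * y \<Longrightarrow> x \<le> z"
proof -
  assume y: "y \<noteq> 0" and le: "x * y \<le> z * y"
  obtain y' where y': "y * y' = 1" using inv_ex y by blast
  have "x * y * y' \<le> z * y * y'" using mm[OF le, of y' y'] by simp
  thus ?thesis using y' by (simp add: mult.assoc)
qed

lemma pow_mono: "(x::'r) \<le> y \<Longrightarrow> x ^ n \<le> y ^ n"
  by (induction n) (auto intro: mm)

lemma one_le_pow: "(1::'r) \<le> x \<Longrightarrow> 1 \<le> x ^ n"
  using pow_mono[of 1 x n] by simp

lemma of_nat_mono': "i \<le> j \<Longrightarrow> (of_nat i::'r) \<le> of_nat j"
proof -
  assume "i \<le> j"
  then obtain d where d: "j = i + d" using le_Suc_ex by blast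
  have "of_nat i + 0 \<le> (of_nat i + of_nat d::'r)" using ma[OF order_refl nonneg] by blast
  thus ?thesis using d by simp
qed

lemma summono: "(\<And>i. i \<in> S \<Longrightarrow> g i \<le> (k i::'r)) \<Longrightarrow> sum g S \<le> sum k S"
proof (induction S rule: infinite_finite_induct)
  case (insert x F)
  then show ?case by (simp add: ma)
qed auto

lemma temper:
  assumes T: "tempered_growth TT" and P: "P \<noteq> 0" and D: "(D::'r) \<noteq> 0"
    and le: "\<And>k. X ^ k \<le> of_nat (poly P k) * D ^ k"
  shows "X \<le> D"
proof -
  obtain y where y: "D * y = 1" using inv_ex D by blast
  have "\<forall>k. (X*y) ^ k \<le> of_nat (poly P k)"
  proof
    fix k
    have "X^k * y^k \<le> of_nat (poly P k) * D ^ k * y^k" using mm[OF le order_refl] .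
    also have "... = of_nat (poly P k) * (D*y)^k" by (simp add: power_mult_distrib mult.assoc)
    finally show "(X*y) ^ k \<le> of_nat (poly P k)" using y by (simp add: power_mult_distrib)
  qed
  hence "X * y \<le> 1" using T P unfolding tempered_growth_def by blast
  hence "X * y * D \<le> 1 * D" using mm order_refl by blast
  moreover have "X * y * D = X" using y by (metis mult.assoc mult.commute mult_1_right)
  ultimately show ?thesis by simp
qed

context
  fixes f :: "'a::comm_ring_1 \<Rightarrow> 'r"
  assumes H: "halo_morphism_from_ring f" and PM: "power_multiplicative f"
begin

lemma f0: "f 0 = 0" using H unfolding halo_morphism_from_ring_def by blast
lemma f1: "f 1 = 1" using H unfolding halo_morphism_from_ring_def by blast
lemma fadd: "f (a + b) \<le> f a + f b" using H unfolding halo_morphism_from_ring_def by blast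
lemma fmul: "f (a * b) \<le> f a * f b" using H unfolding halo_morphism_from_ring_def by blast
lemma fpow: "f (a ^ n) = f a ^ n" using PM unfolding power_multiplicative_def by blast

lemma fsum: "f (sum g S) \<le> sum (\<lambda>i. f (g i)) S"
proof (induction S rule: infinite_finite_induct)
  case (insert x F)
  have "f (sum g (insert x F)) = f (g x + sum g F)" using insert by simp
  also have "... \<le> f (g x) + f (sum g F)" by (rule fadd)
  also have "... \<le> f (g x) + sum (\<lambda>i. f (g i)) F" using ma[OF order_refl insert.IH] .
  finally show ?case using insert by simp
qed (auto simp: f0)

lemma fnat: "f (of_nat n) \<le> of_nat n"
proof (induction n)
  case 0 then show ?case by (simp add: f0)
next
  case (Suc n)
  have "f (of_nat (Suc n)) = f (1 + of_nat n)" by simp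
  also have "... \<le> f 1 + f (of_nat n)" by (rule fadd)
  also have "... \<le> 1 + of_nat n" using ma[OF order_refl Suc.IH] f1 by simp
  finally show ?case by simp
qed

lemma fneg1: "f (-1) = 1"
proof -
  have sq: "f (-1) * f (-1) = 1" using fpow[of "-1" 2] f1 by (simp add: power2_eq_square)
  show ?thesis
  proof (cases "f (-1) \<le> 1")
    case True
    have "f (-1) * f (-1) \<le> 1 * f (-1)" using mm[OF True order_refl] .
    then show ?thesis using sq True by simp
  next
    case False
    hence "1 \<le> f (-1)" by simp
    have "1 * f (-1) \<le> f (-1) * f (-1)" using mm[OF \<open>1 \<le> f (-1)\<close> order_refl] .
    then show ?thesis using sq False by simp
  qed
qed

lemma fneg: "f (- x) = f x"
proof -
  have "f (- x) \<le> f x" using fmul[of "-1" x] fneg1 by simp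
  moreover have "f x \<le> f (- x)" using fmul[of "-1" "-x"] fneg1 by simp
  ultimately show ?thesis by simp
qed

lemma digits:
  assumes m: "1 \<le> m" and M1: "1 \<le> M" and fm: "f (of_nat m) \<le> M"
  shows "N \<le> m ^ j \<Longrightarrow> f (of_nat N) \<le> of_nat ((j+1)*m) * M ^ j"
proof (induction j arbitrary: N)
  case 0
  hence "N \<le> m" using m by simp
  have "f (of_nat N) \<le> of_nat N" by (rule fnat)
  also have "... \<le> of_nat m" using \<open>N \<le> m\<close> of_nat_mono' by blast
  finally show ?case by simp
next
  case (Suc j)
  define q where "q = N div m"
  define r where "r = N mod m"
  have N: "N = m * q + r" by (simp add: q_def r_def)
  have r: "r < m" using m by (simp add: r_def)
  have q: "q \<le> m ^ j"
  proof -
    have "q \<le> m ^ Suc j div m" using Suc.prems div_le_mono q_def by blast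
    also have "m ^ Suc j div m = m ^ j" using m by simp
    finally show ?thesis .
  qed
  have "f (of_nat N) = f (of_nat m * of_nat q + of_nat r)" by (simp add: N)
  also have "... \<le> f (of_nat m * of_nat q) + f (of_nat r)" by (rule fadd)
  also have "... \<le> M * (of_nat ((j+1)*m) * M^j) + of_nat m"
  proof (rule ma)
    show "f (of_nat m * of_nat q) \<le> M * (of_nat ((j+1)*m) * M^j)"
      by (rule order_trans[OF fmul mm[OF fm Suc.IH[OF q]]])
    show "f (of_nat r) \<le> of_nat m"
      using order_trans[OF fnat of_nat_mono'[of r m]] r by simp
  qed
  also have "... \<le> of_nat ((Suc j + 1)*m) * M ^ Suc j"
  proof -
    have "(of_nat m::'r) = of_nat m * 1" by simp
    also have "... \<le> of_nat m * M^Suc j" using mm[OF order_refl one_le_pow[OF M1]] .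
    finally have "M * (of_nat ((j+1)*m) * M^j) + of_nat m
        \<le> M * (of_nat ((j+1)*m) * M^j) + of_nat m * M ^ Suc j" using ma order_refl by blast
    also have "... = of_nat ((Suc j + 1)*m) * M ^ Suc j" by (simp add: algebra_simps)
    finally show ?thesis .
  qed
  finally show ?case .
qed

lemma Klem:
  assumes T: "tempered_growth TT" and m: "1 \<le> m" and M1: "1 \<le> M" and fm: "f (of_nat m) \<le> M"
    and le: "n ^ q \<le> m ^ p"
  shows "f (of_nat n) ^ q \<le> M ^ p"
proof (rule temper[OF T, of "[:m, p*m:]"])
  show "[:m, p*m:] \<noteq> 0" using m by simp
  show "M^p \<noteq> 0" using one_le_pow[OF M1, of p] zl1 by auto
  fix k
  have "(f (of_nat n) ^ q) ^ k = f (of_nat (n ^ (q*k)))" by (simp add: fpow power_mult)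
  also have "... \<le> of_nat ((p*k+1)*m) * M ^ (p*k)"
    apply (rule digits[OF m M1 fm])
    using le by (simp add: power_mult power_mono)
  also have "... = of_nat (poly [:m, p*m:] k) * (M^p)^k" by (simp add: power_mult[symmetric] algebra_simps)
  finally show "(f (of_nat n) ^ q) ^ k \<le> of_nat (poly [:m, p*m:] k) * (M^p)^k" .
qed


lemma part1:
  assumes T: "tempered_growth TT"
  shows "f (a + b) \<le> max (f 2) 1 * max (f a) (f b)"
proof -
  define C where "C = max (f 2) 1"
  define M where "M = max (f a) (f b)"
  have C1: "1 \<le> C" by (simp add: C_def)
  have fa: "f a \<le> M" "f b \<le> M" by (auto simp: M_def)
  have "f (a + b) \<le> C * M"
  proof (cases "M = 0")
    case True
    then have "f a = 0" "f b = 0" using fa nonneg[of "f a"] nonneg[of "f b"] by auto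
    then have "f (a+b) \<le> 0" using fadd[of a b] by simp
    then show ?thesis using nonneg order_trans by blast
  next
    case False
    have CM: "C * M \<noteq> 0" using nzd False C1 zl1 by fastforce
    show ?thesis
    proof (rule temper[OF T, of "[:2,4,2:]"])
      show "[:2,4,2:] \<noteq> (0::nat poly)" by simp
      show "C*M \<noteq> 0" by fact
      fix n
      have "f (a+b) ^ n = f (\<Sum>k\<le>n. of_nat (n choose k) * a ^ k * b ^ (n - k))"
        by (simp add: fpow[symmetric] binomial_ring)
      also have "... \<le> (\<Sum>k\<le>n. f (of_nat (n choose k) * a ^ k * b ^ (n - k)))" by (rule fsum)
      also have "... \<le> (\<Sum>k\<le>n. of_nat ((n+1)*2) * C^n * M^n)"
      proof (rule summono)
        fix k assume k: "k \<in> {..n}"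
        have f2: "f (of_nat 2) \<le> C" by (simp add: C_def)
        have c: "f (of_nat (n choose k)) \<le> of_nat ((n+1)*2) * C^n"
          by (rule digits[OF _ C1 f2]) (auto simp: binomial_le_pow2)
        have "f (of_nat (n choose k) * a ^ k * b ^ (n - k))
             \<le> f (of_nat (n choose k)) * f a ^ k * f b ^ (n-k)"
        proof -
          have "f (of_nat (n choose k) * a ^ k * b ^ (n - k))
             \<le> f (of_nat (n choose k) * a ^ k) * f (b ^ (n - k))" by (rule fmul)
          also have "... \<le> (f (of_nat (n choose k)) * f (a ^ k)) * f (b ^ (n - k))"
            by (rule mm[OF fmul order_refl])
          finally show ?thesis by (simp only: fpow)
        qed
        also have "... \<le> of_nat ((n+1)*2) * C^n * M^k * M^(n-k)"
          by (intro mm c pow_mono fa)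
        also have "... = of_nat ((n+1)*2) * C^n * M^n"
          using k by (simp add: mult.assoc power_add[symmetric])
        finally show "f (of_nat (n choose k) * a ^ k * b ^ (n - k)) \<le> of_nat ((n+1)*2) * C^n * M^n" .
      qed
      also have "... = of_nat (poly [:2,4,2:] n) * (C*M)^n"
      proof -
        have e: "poly [:2,4,2:] n = (n+1)*((n+1)*2)" by (simp add: algebra_simps)
        show ?thesis by (simp only: sum_constant card_atMost e of_nat_mult power_mult_distrib mult.assoc Suc_eq_plus1)
      qed
      finally show "f (a+b) ^ n \<le> of_nat (poly [:2,4,2:] n) * (C*M)^n" .
    qed
  qed
  thus ?thesis by (simp add: C_def M_def)
qed

context
  assumes T: "tempered_growth TT" and f2: "1 < f 2"
begin

lemma h_ge1: "1 \<le> m \<Longrightarrow> 1 \<le> f (of_nat m)"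
proof -
  assume m: "1 \<le> m"
  show ?thesis
  proof (cases "m = 1")
    case True then show ?thesis by (simp add: f1)
  next
    case False
    hence "2 ^ 1 \<le> m ^ 1" using m by simp
    from Klem[OF T m _ _ this, of "max 1 (f (of_nat m))"]
    have "f 2 \<le> max 1 (f (of_nat m))" by simp
    then show ?thesis using f2 by (auto simp: max_def split: if_splits)
  qed
qed

lemma Kfm: "1 \<le> m \<Longrightarrow> n ^ q \<le> m ^ p \<Longrightarrow> f (of_nat n) ^ q \<le> f (of_nat m) ^ p"
  using Klem[OF T _ h_ge1 order_refl] by blast

lemma hmono: "n \<le> m \<Longrightarrow> f (of_nat n) \<le> f (of_nat m)"
proof (cases "m = 0")
  case True
  assume "n \<le> m" then show ?thesis using True by simp
next
  case False
  assume "n \<le> m"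
  then show ?thesis using Kfm[of m n 1 1] False by simp
qed

lemma f2le: "f 2 ^ 2 \<le> (of_nat 4::'r)"
proof -
  have h: "f 2 \<le> (2::'r)" using fnat[of 2] by simp
  have "f 2 ^ 2 \<le> (2::'r)^2" by (rule pow_mono[OF h])
  thus ?thesis by (simp add: power2_eq_square)
qed

lemma hmult: "f (of_nat (a*c)) = f (of_nat a) * f (of_nat c)"
proof (cases "a = 0 \<or> c = 0")
  case True then show ?thesis by (auto simp: f0)
next
  case False
  hence ac: "1 \<le> a*c" "1 \<le> a" "1 \<le> c" by auto
  have "f (of_nat a) * f (of_nat c) \<le> f (of_nat (a*c))"
  proof (rule temper[OF T, of "[:4:]"])
    show "[:4:] \<noteq> (0::nat poly)" by simp
    show "f (of_nat (a*c)) \<noteq> 0" using h_ge1[OF ac(1)] zl1 by auto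
    fix k
    obtain r1 where r1: "2^r1 \<le> a^k" "a^k < 2^(r1+1)"
      using ex_power_ivl1[of 2 "a^k"] ac by auto
    obtain r2 where r2: "2^r2 \<le> c^k" "c^k < 2^(r2+1)"
      using ex_power_ivl1[of 2 "c^k"] ac by auto
    have "(f (of_nat a) * f (of_nat c)) ^ k = f (of_nat a) ^ k * f (of_nat c) ^ k"
      by (simp add: power_mult_distrib)
    also have "... \<le> f (of_nat 2) ^ (r1+1) * f (of_nat 2) ^ (r2+1)"
      using r1 r2 by (intro mm Kfm) auto
    also have "... = f 2 ^ 2 * f (of_nat 2) ^ (r1+r2)" by (simp add: power_add power2_eq_square mult_ac)
    also have "... \<le> of_nat 4 * f (of_nat (a*c)) ^ k"
    proof (rule mm[OF f2le Kfm[OF ac(1)]])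
      have "2^(r1+r2) = 2^r1 * (2::nat)^r2" by (simp add: power_add)
      also have "... \<le> a^k * c^k" using r1 r2 by (intro mult_le_mono) auto
      finally show "2^(r1+r2) \<le> (a*c)^k" by (simp add: power_mult_distrib)
    qed
    finally show "(f (of_nat a) * f (of_nat c)) ^ k \<le> of_nat (poly [:4:] k) * f (of_nat (a*c)) ^ k"
      by simp
  qed
  moreover have "f (of_nat (a*c)) \<le> f (of_nat a) * f (of_nat c)"
    using fmul by (metis of_nat_mult)
  ultimately show ?thesis by simp
qed

lemma ex_k: "1 \<le> (n::nat) \<Longrightarrow> \<exists>k. 2 * n^k \<le> (n+1)^k"
proof -
  assume n: "1 \<le> n"
  have "1 < real (n+1) / real n" using n by simp
  then obtain k where k: "2 < (real (n+1) / real n)^k" using real_arch_pow by blast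
  have pos: "0 < real n ^ k" using n by simp
  have "2 * real n ^ k < (real (n+1) / real n)^k * real n ^ k"
    using mult_strict_right_mono[OF k pos] .
  also have "... = real (n+1) ^ k" using n by (simp add: power_divide)
  finally have "real (2 * n^k) < real ((n+1)^k)" by simp
  hence "2 * n^k < (n+1)^k" by (simp only: of_nat_less_iff)
  thus ?thesis by (intro exI[of _ k]) simp
qed

lemma hstrict: "n < m \<Longrightarrow> f (of_nat n) < f (of_nat m)"
proof (rule ccontr)
  assume nm: "n < m" and "\<not> f (of_nat n) < f (of_nat m)"
  hence le: "f (of_nat m) \<le> f (of_nat n)" by simp
  have "f (of_nat (n+1)) \<le> f (of_nat m)" using nm by (intro hmono) simp
  with le have le1: "f (of_nat (n+1)) \<le> f (of_nat n)" by simp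
  show False
  proof (cases "n = 0")
    case True then show False using le1 f0 f1 zl1 by simp
  next
    case False
    hence n: "1 \<le> n" by simp
    obtain k where k: "2 * n^k \<le> (n+1)^k" using ex_k[OF n] by blast
    have "f 2 * f (of_nat n) ^ k = f (of_nat (2 * n^k))"
      by (simp only: hmult of_nat_power fpow) simp
    also have "... \<le> f (of_nat ((n+1)^k))" using k by (rule hmono)
    also have "... = f (of_nat (n+1)) ^ k" by (simp only: of_nat_power fpow)
    also have "... \<le> 1 * f (of_nat n) ^ k" using pow_mono[OF le1] by simp
    finally have "f 2 \<le> 1" by (rule cancel[rotated]) (use one_le_pow[OF h_ge1[OF n], of k] zl1 in auto)
    then show False using f2 by simp
  qed
qed

lemma part2: "mult_equiv (\<lambda>n::int. f (of_int n)) arch_abs"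
proof -
  have g: "f (of_int n) = f (of_nat (nat \<bar>n\<bar>))" for n :: int
  proof -
    have "n = int (nat \<bar>n\<bar>) \<or> n = - int (nat \<bar>n\<bar>)" by arith
    then show ?thesis
    proof
      assume e: "n = int (nat \<bar>n\<bar>)"
      have "f (of_int n) = f (of_int (int (nat \<bar>n\<bar>)))" by (subst e) (rule refl)
      also have "... = f (of_nat (nat \<bar>n\<bar>))" by (simp only: of_int_of_nat_eq)
      finally show ?thesis .
    next
      assume e: "n = - int (nat \<bar>n\<bar>)"
      have "f (of_int n) = f (of_int (- int (nat \<bar>n\<bar>)))" by (subst e) (rule refl)
      also have "... = f (- of_nat (nat \<bar>n\<bar>))" by (simp only: of_int_of_nat_eq of_int_minus)
      also have "... = f (of_nat (nat \<bar>n\<bar>))" by (rule fneg)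
      finally show ?thesis .
    qed
  qed
  have ar: "arch_abs n = of_nat (nat \<bar>n\<bar>)" for n :: int
  proof -
    have "max n (-n) = int (nat \<bar>n\<bar>)" by arith
    thus ?thesis unfolding arch_abs_def by (simp only: of_int_of_nat_eq)
  qed
  have L1: "f (of_nat A) * f (of_nat C) \<le> f (of_nat B)"
    if "(of_nat A::rat) * of_nat C \<le> of_nat B" for A B C
  proof -
    have "A * C \<le> B" using that by (simp only: of_nat_mult[symmetric] of_nat_le_iff)
    hence "f (of_nat (A * C)) \<le> f (of_nat B)" by (rule hmono)
    thus ?thesis by (simp only: hmult)
  qed
  have L2: "(of_nat A::rat) * of_nat C \<le> of_nat B"
    if h: "f (of_nat A) * f (of_nat C) \<le> f (of_nat B)" for A B C
  proof -
    have "A * C \<le> B"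
    proof (rule ccontr)
      assume "\<not> A * C \<le> B"
      hence "B < A * C" by simp
      hence "f (of_nat B) < f (of_nat (A * C))" by (rule hstrict)
      hence "f (of_nat B) < f (of_nat A) * f (of_nat C)" by (simp only: hmult)
      with h show False by simp
    qed
    thus ?thesis by (simp only: of_nat_mult[symmetric] of_nat_le_iff)
  qed
  show ?thesis unfolding mult_equiv_def mult_le_def g ar using L1 L2 by blast
qed

end

end
end

theorem theorem2p8:
  fixes f :: "'a::comm_ring_1 \<Rightarrow> 'r::{comm_semiring_1,linorder}"
  assumes "pos_tot_aura TYPE('r)"
    and "tempered_growth TYPE('r)"
    and "halo_morphism_from_ring f"
    and "power_multiplicative f"
  shows "(\<forall>a b. f (a + b) \<le> max (f 2) 1 * max (f a) (f b)) \<and>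
         (f 2 > 1 \<longrightarrow> mult_equiv (\<lambda>n::int. f (of_int n)) arch_abs)"
  using part1[OF assms(1,3,4,2)] part2[OF assms(1,3,4,2)] by blast

end
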